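(* Let $P$ be an Eulerian poset of rank $d$. Then $$\sum_{\hat0\le x\le\hat1}B([\hat0,x];u^{-1},v^{-1})(uv)^{\rho(x)}(v-u)^{d-\rho(x)}=\sum_{\hat0\le x\le\hat1}B([x,\hat1];u,v)(uv-1)^{\rho(x)}.$$
   Context: An Eulerian poset is a finite poset with least element $\hat0$, greatest element $\hat1$, all maximal chains of the same length $d$ (the rank), rank function $\rho$, and Möbius function $\mu(x,y)=(-1)^{\rho(y)-\rho(x)}$ for $x\le y$; intervals $[x,y]$ are Eulerian of rank $\rho(y)-\rho(x)$. For Eulerian $Q$ of rank $e$: $G(Q,t)=H(Q,t)=1$ if $e=0$; for $e>0$, $H(Q,t)=\sum_{\hat0<x\le\hat1}(t-1)^{\rho(x)-1}G([x,\hat1],t)$, $G(Q,t)=\tau_{<e/2}((1-t)H(Q,t))$ with $\tau_{<r}(\sum a_it^i)=\sum_{i<r}a_it^i$. $B(Q;u,v)\in\mathbb{Z}[u,v]$ is defined by $B=1$ if $e=0$ and for $e>0$ recursively by $\sum_{\hat0\le x\le\hat1}B([\hat0,x];u,v)u^{e-\rho(x)}G([x,\hat1],u^{-1}v)=G(Q,uv)$. *)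

theory Defs
  imports "HOL-Computational_Algebra.Polynomial"
begin

text \<open>A finite poset is given by a carrier set S and a relation le (only its
restriction to S matters).  All posets below are intervals of a fixed poset.\<close>

definition itv :: "'a set \<Rightarrow> ('a \<Rightarrow> 'a \<Rightarrow> bool) \<Rightarrow> 'a \<Rightarrow> 'a \<Rightarrow> 'a set" where
  "itv S le x y = {z \<in> S. le x z \<and> le z y}"

definition is_chain :: "'a set \<Rightarrow> ('a \<Rightarrow> 'a \<Rightarrow> bool) \<Rightarrow> 'a set \<Rightarrow> bool" where
  "is_chain S le C \<longleftrightarrow> C \<subseteq> S \<and> (\<forall>a\<in>C. \<forall>b\<in>C. le a b \<or> le b a)"

definition max_chain :: "'a set \<Rightarrow> ('a \<Rightarrow> 'a \<Rightarrow> bool) \<Rightarrow> 'a set \<Rightarrow> bool" where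
  "max_chain S le C \<longleftrightarrow> is_chain S le C \<and> (\<forall>D. is_chain S le D \<and> C \<subseteq> D \<longrightarrow> D = C)"

text \<open>Rank of a finite poset: length (= cardinality minus one) of its maximal chains
(all of the same length in the graded case; we take the maximum).\<close>
definition prank :: "'a set \<Rightarrow> ('a \<Rightarrow> 'a \<Rightarrow> bool) \<Rightarrow> nat" where
  "prank S le = Max {card C | C. max_chain S le C} - 1"

definition rk :: "'a set \<Rightarrow> ('a \<Rightarrow> 'a \<Rightarrow> bool) \<Rightarrow> 'a \<Rightarrow> 'a \<Rightarrow> nat" where
  "rk S le x y = prank (itv S le x y) le"

text \<open>Moebius function of the poset, via the usual recursion
  mu(x,x) = 1, mu(x,y) = - sum over x<=z<y of mu(x,z); the fuel argument is
  instantiated with card S, which exceeds the recursion depth.\<close>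
fun mobf :: "nat \<Rightarrow> 'a set \<Rightarrow> ('a \<Rightarrow> 'a \<Rightarrow> bool) \<Rightarrow> 'a \<Rightarrow> 'a \<Rightarrow> int" where
  "mobf 0 S le x y = 0"
| "mobf (Suc n) S le x y =
     (if x = y then 1 else - (\<Sum>z\<in>itv S le x y - {y}. mobf n S le x z))"

definition mobius :: "'a set \<Rightarrow> ('a \<Rightarrow> 'a \<Rightarrow> bool) \<Rightarrow> 'a \<Rightarrow> 'a \<Rightarrow> int" where
  "mobius S le x y = mobf (card S) S le x y"

definition eulerian :: "'a set \<Rightarrow> ('a \<Rightarrow> 'a \<Rightarrow> bool) \<Rightarrow> 'a \<Rightarrow> 'a \<Rightarrow> nat \<Rightarrow> bool" where
  "eulerian S le zero one d \<longleftrightarrow>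
     finite S \<and>
     (\<forall>x\<in>S. le x x) \<and>
     (\<forall>x\<in>S. \<forall>y\<in>S. le x y \<and> le y x \<longrightarrow> x = y) \<and>
     (\<forall>x\<in>S. \<forall>y\<in>S. \<forall>z\<in>S. le x y \<and> le y z \<longrightarrow> le x z) \<and>
     zero \<in> S \<and> one \<in> S \<and> (\<forall>x\<in>S. le zero x \<and> le x one) \<and>
     (\<forall>C. max_chain S le C \<longrightarrow> card C = d + 1) \<and>
     (\<forall>x\<in>S. \<forall>y\<in>S. le x y \<longrightarrow>
        mobius S le x y = (-1) ^ (rk S le zero y - rk S le zero x))"

definition tau_half :: "nat \<Rightarrow> int poly \<Rightarrow> int poly" where
  "tau_half e p = (\<Sum>i\<in>{i. 2 * i < e}. monom (coeff p i) i)"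

text \<open>G polynomial of the interval [x,y] (fuel argument, instantiated with card S).
  Inside the sum, (t-1)^(rho(z)-1) * G([z,y],t) over x < z <= y, i.e. the H polynomial.\<close>
fun Gf :: "nat \<Rightarrow> 'a set \<Rightarrow> ('a \<Rightarrow> 'a \<Rightarrow> bool) \<Rightarrow> 'a \<Rightarrow> 'a \<Rightarrow> int poly" where
  "Gf 0 S le x y = 1"
| "Gf (Suc n) S le x y =
     (if rk S le x y = 0 then 1
      else tau_half (rk S le x y)
             ([:1, -1:] * (\<Sum>z\<in>itv S le x y - {x}. [:-1, 1:] ^ (rk S le x z - 1) * Gf n S le z y)))"

definition Gpoly :: "'a set \<Rightarrow> ('a \<Rightarrow> 'a \<Rightarrow> bool) \<Rightarrow> 'a \<Rightarrow> 'a \<Rightarrow> int poly" where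
  "Gpoly S le x y = Gf (card S) S le x y"

definition Hpoly :: "'a set \<Rightarrow> ('a \<Rightarrow> 'a \<Rightarrow> bool) \<Rightarrow> 'a \<Rightarrow> 'a \<Rightarrow> int poly" where
  "Hpoly S le x y = (if rk S le x y = 0 then 1 else
     (\<Sum>z\<in>itv S le x y - {x}. [:-1, 1:] ^ (rk S le x z - 1) * Gpoly S le z y))"

text \<open>Bivariate integer polynomials Z[u,v] are represented as int poly poly:
  polynomials in v whose coefficients are polynomials in u.\<close>
definition varU :: "int poly poly" where "varU = [:[:0, 1:]:]"
definition varV :: "int poly poly" where "varV = [:0, 1:]"

definition subst_uv :: "int poly \<Rightarrow> int poly poly" where
  "subst_uv g = (\<Sum>i\<le>degree g. [:[:coeff g i:]:] * (varU * varV) ^ i)"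

text \<open>u^m g(u^{-1} v) for g in Z[t] of degree at most m.\<close>
definition hom_uv :: "nat \<Rightarrow> int poly \<Rightarrow> int poly poly" where
  "hom_uv m g = (\<Sum>i\<le>degree g. [:[:coeff g i:]:] * varU ^ (m - i) * varV ^ i)"

text \<open>B polynomial of [x,y]: the defining recursion
  sum_{x<=z<=y} B([x,z]) u^{rho(y)-rho(z)} G([z,y],u^{-1}v) = G([x,y],uv),
  solved for the term z = y (for which u^0 G(point) = 1).\<close>
fun Bf :: "nat \<Rightarrow> 'a set \<Rightarrow> ('a \<Rightarrow> 'a \<Rightarrow> bool) \<Rightarrow> 'a \<Rightarrow> 'a \<Rightarrow> int poly poly" where
  "Bf 0 S le x y = 1"
| "Bf (Suc n) S le x y =
     (if rk S le x y = 0 then 1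
      else subst_uv (Gpoly S le x y)
           - (\<Sum>z\<in>itv S le x y - {y}. Bf n S le x z * hom_uv (rk S le z y) (Gpoly S le z y)))"

definition Bpoly :: "'a set \<Rightarrow> ('a \<Rightarrow> 'a \<Rightarrow> bool) \<Rightarrow> 'a \<Rightarrow> 'a \<Rightarrow> int poly poly" where
  "Bpoly S le x y = Bf (card S) S le x y"

definition eval_uv :: "int poly poly \<Rightarrow> real \<Rightarrow> real \<Rightarrow> real" where
  "eval_uv p u v = poly (map_poly (\<lambda>c. poly (map_poly of_int c) u) p) v"

end

theory Submission
  imports Defs
begin

locale eul =
  fixes S :: "'a set" and le :: "'a \<Rightarrow> 'a \<Rightarrow> bool" and zero one :: 'a and d :: nat
  assumes E: "eulerian S le zero one d"
begin

lemma EP1: "finite S"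
  using E unfolding eulerian_def by (elim conjE) assumption
lemma EP2: "\<forall>x\<in>S. le x x"
  using E unfolding eulerian_def by (elim conjE) assumption
lemma EP3: "\<forall>x\<in>S. \<forall>y\<in>S. le x y \<and> le y x \<longrightarrow> x = y"
  using E unfolding eulerian_def by (elim conjE) assumption
lemma EP4: "\<forall>x\<in>S. \<forall>y\<in>S. \<forall>z\<in>S. le x y \<and> le y z \<longrightarrow> le x z"
  using E unfolding eulerian_def by (elim conjE) assumption
lemma EP5: "zero \<in> S"
  using E unfolding eulerian_def by (elim conjE) assumption
lemma EP6: "one \<in> S"
  using E unfolding eulerian_def by (elim conjE) assumption
lemma EP7: "\<forall>x\<in>S. le zero x \<and> le x one"
  using E unfolding eulerian_def by (elim conjE) assumption
lemma EP8: "\<forall>C. max_chain S le C \<longrightarrow> card C = d + 1"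
  using E unfolding eulerian_def by (elim conjE) assumption
lemma EP9: "\<forall>x\<in>S. \<forall>y\<in>S. le x y \<longrightarrow> mobius S le x y = (-1) ^ (rk S le zero y - rk S le zero x)"
  using E unfolding eulerian_def by (elim conjE) assumption

lemma finS: "finite S" by (rule EP1)
lemma prefl: "x \<in> S \<Longrightarrow> le x x" using EP2 by blast
lemma antisym: "x \<in> S \<Longrightarrow> y \<in> S \<Longrightarrow> le x y \<Longrightarrow> le y x \<Longrightarrow> x = y"
  using EP3 by blast
lemma trans: "x \<in> S \<Longrightarrow> y \<in> S \<Longrightarrow> z \<in> S \<Longrightarrow> le x y \<Longrightarrow> le y z \<Longrightarrow> le x z"
  using EP4 by blast
lemma zeroS: "zero \<in> S" by (rule EP5)
lemma oneS: "one \<in> S" by (rule EP6)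
lemma zero_le: "x \<in> S \<Longrightarrow> le zero x" using EP7 by blast
lemma le_one: "x \<in> S \<Longrightarrow> le x one" using EP7 by blast
lemma maxS: "max_chain S le C \<Longrightarrow> card C = d + 1" using EP8 by blast
lemma mob: "x \<in> S \<Longrightarrow> y \<in> S \<Longrightarrow> le x y \<Longrightarrow>
        mobius S le x y = (-1) ^ (rk S le zero y - rk S le zero x)"
  using EP9 by blast

abbreviation I where "I x y \<equiv> itv S le x y"
abbreviation r where "r x y \<equiv> rk S le x y"

lemma itv_mem: "z \<in> I x y \<longleftrightarrow> z \<in> S \<and> le x z \<and> le z y" by (simp add: itv_def)
lemma itv_sub: "I x y \<subseteq> S" by (auto simp: itv_def)
lemma fin_itv: "finite (I x y)" using finS itv_sub finite_subset by blast
lemma itv_full: "I zero one = S" using zero_le le_one by (auto simp: itv_def)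
lemma itv_single: "x \<in> S \<Longrightarrow> I x x = {x}" using prefl antisym by (auto simp: itv_def)
lemma left_in: "x \<in> S \<Longrightarrow> le x y \<Longrightarrow> x \<in> I x y" using prefl by (simp add: itv_def)
lemma right_in: "y \<in> S \<Longrightarrow> le x y \<Longrightarrow> y \<in> I x y" using prefl by (simp add: itv_def)

lemma mc_contains:
  assumes "x \<in> S" "y \<in> S" "le x y" "max_chain (I x y) le C"
  shows "x \<in> C" "y \<in> C"
proof -
  have ch: "is_chain (I x y) le C" and mx: "\<And>D. is_chain (I x y) le D \<Longrightarrow> C \<subseteq> D \<Longrightarrow> D = C"
    using assms(4) by (auto simp: max_chain_def)
  have "is_chain (I x y) le (insert x C)"
    using ch assms by (auto simp: is_chain_def itv_def intro: prefl)
  then show "x \<in> C" using mx by blast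
  have "is_chain (I x y) le (insert y C)"
    using ch assms by (auto simp: is_chain_def itv_def intro: prefl)
  then show "y \<in> C" using mx by blast
qed

lemma mc_fin: "max_chain (I x y) le C \<Longrightarrow> finite C"
  using fin_itv by (auto simp: max_chain_def is_chain_def intro: finite_subset)

lemma mc_exists: "\<exists>C. max_chain (I x y) le C"
proof -
  let ?A = "{C. is_chain (I x y) le C}"
  have "?A \<subseteq> Pow (I x y)" by (auto simp: is_chain_def)
  hence "finite ?A" using fin_itv finite_subset by blast
  moreover have "{} \<in> ?A" by (simp add: is_chain_def)
  ultimately obtain m where "m \<in> ?A" "\<forall>b\<in>?A. m \<le> b \<longrightarrow> m = b"
    using finite_has_maximal[of ?A] by blast
  thus ?thesis unfolding max_chain_def by blast
qed

lemma mc_union: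
  assumes xS: "x \<in> S" and zS: "z \<in> S" and yS: "y \<in> S" and xz: "le x z" and zy: "le z y"
    and C1: "max_chain (I x z) le C1" and C2: "max_chain (I z y) le C2"
  shows "max_chain (I x y) le (C1 \<union> C2)" "C1 \<inter> C2 = {z}"
proof -
  have ch1: "is_chain (I x z) le C1" and mx1: "\<And>D. is_chain (I x z) le D \<Longrightarrow> C1 \<subseteq> D \<Longrightarrow> D = C1"
    using C1 by (auto simp: max_chain_def)
  have ch2: "is_chain (I z y) le C2" and mx2: "\<And>D. is_chain (I z y) le D \<Longrightarrow> C2 \<subseteq> D \<Longrightarrow> D = C2"
    using C2 by (auto simp: max_chain_def)
  have z1: "z \<in> C1" using mc_contains[OF xS zS xz C1] by simp
  have z2: "z \<in> C2" using mc_contains[OF zS yS zy C2] by simp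
  have s1: "C1 \<subseteq> I x z" and s2: "C2 \<subseteq> I z y" using ch1 ch2 by (auto simp: is_chain_def)
  have chU: "is_chain (I x y) le (C1 \<union> C2)"
    unfolding is_chain_def
  proof (intro conjI ballI)
    show "C1 \<union> C2 \<subseteq> I x y" using s1 s2 xS zS yS xz zy by (auto simp: itv_def intro: trans)
  next
    fix a b assume a: "a \<in> C1 \<union> C2" and b: "b \<in> C1 \<union> C2"
    show "le a b \<or> le b a"
    proof (cases "a \<in> C1")
      case True
      show ?thesis
      proof (cases "b \<in> C1")
        case True
        then show ?thesis using \<open>a \<in> C1\<close> ch1 by (auto simp: is_chain_def)
      next
        case False
        hence "b \<in> C2" using b by blast
        hence "le a b" using True s1 s2 trans[of a z b] zS unfolding itv_def by blast
        thus ?thesis by blast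
      qed
    next
      case False
      hence aC2: "a \<in> C2" using a by blast
      show ?thesis
      proof (cases "b \<in> C2")
        case True
        then show ?thesis using aC2 ch2 by (auto simp: is_chain_def)
      next
        case False
        hence "b \<in> C1" using b by blast
        hence "le b a" using aC2 s1 s2 trans[of b z a] zS unfolding itv_def by blast
        thus ?thesis by blast
      qed
    qed
  qed
  show "max_chain (I x y) le (C1 \<union> C2)"
    unfolding max_chain_def
  proof (intro conjI chU allI impI)
    fix D assume D: "is_chain (I x y) le D \<and> C1 \<union> C2 \<subseteq> D"
    have DS: "D \<subseteq> I x y" and Dc: "\<And>a b. a \<in> D \<Longrightarrow> b \<in> D \<Longrightarrow> le a b \<or> le b a"
      using D by (auto simp: is_chain_def)
    have "D \<subseteq> C1 \<union> C2"
    proof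
      fix w assume wD: "w \<in> D"
      have wS: "w \<in> S" "le x w" "le w y" using wD DS by (auto simp: itv_def)
      have "le w z \<or> le z w" using Dc[OF wD] z1 D by blast
      thus "w \<in> C1 \<union> C2"
      proof
        assume wz: "le w z"
        have "is_chain (I x z) le (insert w C1)"
          unfolding is_chain_def
        proof (intro conjI ballI)
          show "insert w C1 \<subseteq> I x z" using s1 wS wz by (auto simp: itv_def)
        next
          fix a b assume "a \<in> insert w C1" "b \<in> insert w C1"
          moreover have "insert w C1 \<subseteq> D" using wD D by blast
          ultimately show "le a b \<or> le b a" using Dc by blast
        qed
        hence "insert w C1 = C1" using mx1 by blast
        thus ?thesis by blast
      next
        assume zw: "le z w"
        have "is_chain (I z y) le (insert w C2)"
          unfolding is_chain_def
        proof (intro conjI ballI)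
          show "insert w C2 \<subseteq> I z y" using s2 wS zw by (auto simp: itv_def)
        next
          fix a b assume "a \<in> insert w C2" "b \<in> insert w C2"
          moreover have "insert w C2 \<subseteq> D" using wD D by blast
          ultimately show "le a b \<or> le b a" using Dc by blast
        qed
        hence "insert w C2 = C2" using mx2 by blast
        thus ?thesis by blast
      qed
    qed
    thus "D = C1 \<union> C2" using D by blast
  qed
  show "C1 \<inter> C2 = {z}"
  proof
    show "C1 \<inter> C2 \<subseteq> {z}"
    proof
      fix w assume "w \<in> C1 \<inter> C2"
      hence "w \<in> S" "le w z" "le z w" using s1 s2 unfolding itv_def by blast+
      thus "w \<in> {z}" using antisym[of w z] zS by blast
    qed
  qed (use z1 z2 in blast)
qed

lemma card_union1:
  assumes "finite A" "finite B" "A \<inter> B = {z}"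
  shows "card (A \<union> B) + 1 = card A + card B"
  using card_Un_Int[OF assms(1,2)] assms(3) by simp

end

context eul
begin

lemma mc_card_sum:
  assumes xS: "x \<in> S" and yS: "y \<in> S" and xy: "le x y"
    and A: "max_chain (I zero x) le A" and D: "max_chain (I y one) le D"
    and C: "max_chain (I x y) le C"
  shows "card A + card C + card D = d + 3"
proof -
  have AC: "max_chain (I zero y) le (A \<union> C)" "A \<inter> C = {x}"
    using mc_union[OF zeroS xS yS zero_le[OF xS] xy A C] by auto
  have ACD: "max_chain (I zero one) le ((A \<union> C) \<union> D)" "(A \<union> C) \<inter> D = {y}"
    using mc_union[OF zeroS yS oneS zero_le[OF yS] le_one[OF yS] AC(1) D] by auto
  have "card ((A \<union> C) \<union> D) = d + 1" using maxS ACD(1) itv_full by simp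
  moreover have "card ((A \<union> C) \<union> D) + 1 = card (A \<union> C) + card D"
    by (rule card_union1[OF _ _ ACD(2)]) (use mc_fin AC(1) D in auto)
  moreover have "card (A \<union> C) + 1 = card A + card C"
    by (rule card_union1[OF _ _ AC(2)]) (use mc_fin A C in auto)
  ultimately show ?thesis by simp
qed

lemma mc_card_unique:
  assumes xS: "x \<in> S" and yS: "y \<in> S" and xy: "le x y"
    and C: "max_chain (I x y) le C" and C': "max_chain (I x y) le C'"
  shows "card C = card C'"
proof -
  obtain A where A: "max_chain (I zero x) le A" using mc_exists by blast
  obtain D where D: "max_chain (I y one) le D" using mc_exists by blast
  show ?thesis using mc_card_sum[OF xS yS xy A D C] mc_card_sum[OF xS yS xy A D C'] by simp
qed

lemma rk_card:
  assumes xS: "x \<in> S" and yS: "y \<in> S" and xy: "le x y"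
    and C: "max_chain (I x y) le C"
  shows "r x y = card C - 1"
proof -
  have "{card C' | C'. max_chain (I x y) le C'} = {card C}"
  proof
    show "{card C' | C'. max_chain (I x y) le C'} \<subseteq> {card C}"
      using mc_card_unique[OF xS yS xy _ C] by blast
  qed (use C in blast)
  thus ?thesis by (simp add: rk_def prank_def)
qed

lemma mc_card_pos:
  assumes xS: "x \<in> S" and yS: "y \<in> S" and xy: "le x y"
    and C: "max_chain (I x y) le C"
  shows "card C \<ge> 1"
proof -
  have "C \<noteq> {}" using mc_contains[OF xS yS xy C] by blast
  thus ?thesis using mc_fin[OF C] by (simp add: Suc_le_eq card_gt_0_iff)
qed

lemma rk_add:
  assumes xS: "x \<in> S" and zS: "z \<in> S" and yS: "y \<in> S" and xz: "le x z" and zy: "le z y"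
  shows "r x y = r x z + r z y"
proof -
  obtain C1 where C1: "max_chain (I x z) le C1" using mc_exists by blast
  obtain C2 where C2: "max_chain (I z y) le C2" using mc_exists by blast
  have xy: "le x y" using trans[OF xS zS yS xz zy] .
  note U = mc_union[OF xS zS yS xz zy C1 C2]
  have "card (C1 \<union> C2) + 1 = card C1 + card C2"
    by (rule card_union1[OF _ _ U(2)]) (use mc_fin C1 C2 in auto)
  moreover have "card C1 \<ge> 1" "card C2 \<ge> 1"
    using mc_card_pos[OF xS zS xz C1] mc_card_pos[OF zS yS zy C2] by auto
  ultimately show ?thesis
    using rk_card[OF xS yS xy U(1)] rk_card[OF xS zS xz C1] rk_card[OF zS yS zy C2] by simp
qed

lemma rk_refl: "x \<in> S \<Longrightarrow> r x x = 0"
  using rk_add[of x x x] prefl by simp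

lemma rk0:
  assumes xS: "x \<in> S" and yS: "y \<in> S" and xy: "le x y"
  shows "r x y = 0 \<longleftrightarrow> x = y"
proof
  assume "r x y = 0"
  obtain C where C: "max_chain (I x y) le C" using mc_exists by blast
  have "card C = 1" using rk_card[OF xS yS xy C] mc_card_pos[OF xS yS xy C] \<open>r x y = 0\<close> by simp
  then obtain c where "C = {c}" by (rule card_1_singletonE)
  moreover have "{x, y} \<subseteq> C" using mc_contains[OF xS yS xy C] by simp
  ultimately show "x = y" by blast
qed (use rk_refl xS in simp)

lemma rk_top: "r zero one = d"
proof -
  obtain C where C: "max_chain (I zero one) le C" using mc_exists by blast
  have "card C = d + 1" using maxS C itv_full by simp
  thus ?thesis using rk_card[OF zeroS oneS zero_le[OF oneS] C] by simp
qed

lemma mob_rk: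
  assumes xS: "x \<in> S" and yS: "y \<in> S" and xy: "le x y"
  shows "mobius S le x y = (-1) ^ r x y"
  using mob[OF xS yS xy] rk_add[OF zeroS xS yS zero_le[OF xS] xy] by simp

end

context eul
begin

lemma card_itv_pos: "x \<in> S \<Longrightarrow> le x y \<Longrightarrow> card (I x y) \<ge> 1"
proof -
  assume "x \<in> S" "le x y"
  hence "I x y \<noteq> {}" using prefl by (auto simp: itv_def)
  thus ?thesis using fin_itv by (simp add: Suc_le_eq card_gt_0_iff)
qed

lemma card_itv_S: "card (I x y) \<le> card S"
  using card_mono[OF finS itv_sub] .

lemma card_lt_left:
  assumes "x \<in> S" "y \<in> S" "le x y" "z \<in> I x y - {y}"
  shows "card (I x z) < card (I x y)"
proof (rule psubset_card_mono[OF fin_itv])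
  have zS: "z \<in> S" "le x z" "le z y" "z \<noteq> y" using assms(4) by (auto simp: itv_def)
  have "I x z \<subseteq> I x y" using zS assms trans[of _ z y] unfolding itv_def by blast
  moreover have "y \<notin> I x z" using zS antisym[of y z] assms(2) unfolding itv_def by blast
  moreover have "y \<in> I x y" using right_in assms by blast
  ultimately show "I x z \<subset> I x y" by blast
qed

lemma card_lt_right:
  assumes "x \<in> S" "y \<in> S" "le x y" "z \<in> I x y - {x}"
  shows "card (I z y) < card (I x y)"
proof (rule psubset_card_mono[OF fin_itv])
  have zS: "z \<in> S" "le x z" "le z y" "z \<noteq> x" using assms(4) by (auto simp: itv_def)
  have "I z y \<subseteq> I x y" using zS assms trans[of x z] unfolding itv_def by blast
  moreover have "x \<notin> I z y" using zS antisym[of x z] assms(1) unfolding itv_def by blast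
  moreover have "x \<in> I x y" using left_in assms by blast
  ultimately show "I z y \<subset> I x y" by blast
qed

lemma mobf_fuel:
  assumes xS: "x \<in> S"
  shows "y \<in> S \<Longrightarrow> le x y \<Longrightarrow> card (I x y) \<le> n \<Longrightarrow> card (I x y) \<le> m \<Longrightarrow>
    mobf n S le x y = mobf m S le x y"
proof (induction n arbitrary: m y)
  case 0
  then show ?case using card_itv_pos[OF xS] by fastforce
next
  case (Suc n)
  obtain m' where m: "m = Suc m'" using Suc.prems card_itv_pos[OF xS] by (cases m) fastforce+
  show ?case
  proof (cases "x = y")
    case True then show ?thesis using m by simp
  next
    case False
    have "mobf n S le x z = mobf m' S le x z" if z: "z \<in> I x y - {y}" for z
    proof -
      have "card (I x z) < card (I x y)" using card_lt_left[OF xS Suc.prems(1,2) z] .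
      moreover have "z \<in> S" "le x z" using z by (auto simp: itv_def)
      ultimately show ?thesis using Suc.IH[of z m'] Suc.prems m by simp
    qed
    then show ?thesis using False m by simp
  qed
qed

lemma mobius_unf:
  assumes xS: "x \<in> S" and yS: "y \<in> S" and xy: "le x y" and ne: "x \<noteq> y"
  shows "mobius S le x y = - (\<Sum>z\<in>I x y - {y}. mobius S le x z)"
proof -
  obtain k where k: "card S = Suc k" using card_itv_S[of x y] card_itv_pos[OF xS xy]
    by (cases "card S") auto
  have "mobf k S le x z = mobius S le x z" if z: "z \<in> I x y - {y}" for z
  proof -
    have "card (I x z) < card (I x y)" using card_lt_left[OF xS yS xy z] .
    hence "card (I x z) \<le> k" using card_itv_S[of x y] k by simp
    moreover have "z \<in> S" "le x z" using z by (auto simp: itv_def)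
    ultimately show ?thesis unfolding mobius_def k using mobf_fuel[OF xS, of z k "Suc k"] by linarith
  qed
  hence eq: "(\<Sum>z\<in>I x y - {y}. mobf k S le x z) = (\<Sum>z\<in>I x y - {y}. mobius S le x z)"
    by (intro sum.cong refl) blast
  have "mobius S le x y = mobf (Suc k) S le x y" unfolding mobius_def k ..
  also have "\<dots> = - (\<Sum>z\<in>I x y - {y}. mobf k S le x z)"
    using ne by (simp only: mobf.simps if_False)
  finally show ?thesis unfolding eq .
qed

lemma sum_sign:
  assumes xS: "x \<in> S" and yS: "y \<in> S" and xy: "le x y" and ne: "x \<noteq> y"
  shows "(\<Sum>z\<in>I x y. (-1::int) ^ r x z) = 0"
proof -
  have "(\<Sum>z\<in>I x y. (-1::int) ^ r x z) = (\<Sum>z\<in>I x y. mobius S le x z)"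
    by (rule sum.cong) (auto simp: itv_def mob_rk[OF xS])
  also have "\<dots> = mobius S le x y + (\<Sum>z\<in>I x y - {y}. mobius S le x z)"
    using sum.remove[OF fin_itv right_in[OF yS xy]] by simp
  also have "\<dots> = 0" using mobius_unf[OF xS yS xy ne] by simp
  finally show ?thesis .
qed

lemma Gf_fuel:
  assumes yS: "y \<in> S"
  shows "x \<in> S \<Longrightarrow> le x y \<Longrightarrow> card (I x y) \<le> n \<Longrightarrow> card (I x y) \<le> m \<Longrightarrow>
    Gf n S le x y = Gf m S le x y"
proof (induction n arbitrary: m x)
  case 0
  then show ?case using card_itv_pos by fastforce
next
  case (Suc n)
  obtain m' where m: "m = Suc m'" using Suc.prems card_itv_pos by (cases m) fastforce+
  have zeq: "Gf n S le z y = Gf m' S le z y" if z: "z \<in> I x y - {x}" for z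
  proof -
    have "card (I z y) < card (I x y)" using card_lt_right[OF Suc.prems(1) yS Suc.prems(2) z] .
    moreover have "z \<in> S" "le z y" using z by (auto simp: itv_def)
    ultimately show ?thesis using Suc.IH[of z m'] Suc.prems m by simp
  qed
  have eq: "(\<Sum>z\<in>I x y - {x}. [:-1, 1:] ^ (r x z - 1) * Gf n S le z y)
     = (\<Sum>z\<in>I x y - {x}. [:-1, 1:] ^ (r x z - 1) * Gf m' S le z y)"
    by (intro sum.cong refl arg_cong2[where f="(*)"]) (use zeq in blast)+
  show ?case unfolding m Gf.simps eq ..
qed

lemma Gpoly_unf:
  assumes xS: "x \<in> S" and yS: "y \<in> S" and xy: "le x y"
  shows "Gpoly S le x y = (if r x y = 0 then 1 else tau_half (r x y)
             ([:1, -1:] * (\<Sum>z\<in>I x y - {x}. [:-1, 1:] ^ (r x z - 1) * Gpoly S le z y)))"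
proof -
  obtain k where k: "card S = Suc k" using card_itv_S[of x y] card_itv_pos[OF xS xy]
    by (cases "card S") auto
  have zeq: "Gf k S le z y = Gpoly S le z y" if z: "z \<in> I x y - {x}" for z
  proof -
    have "card (I z y) < card (I x y)" using card_lt_right[OF xS yS xy z] .
    hence "card (I z y) \<le> k" using card_itv_S[of x y] k by simp
    moreover have "z \<in> S" "le z y" using z by (auto simp: itv_def)
    ultimately show ?thesis unfolding Gpoly_def k using Gf_fuel[OF yS, of z k "Suc k"] by linarith
  qed
  have eq: "(\<Sum>z\<in>I x y - {x}. [:-1, 1:] ^ (r x z - 1) * Gf k S le z y)
     = (\<Sum>z\<in>I x y - {x}. [:-1, 1:] ^ (r x z - 1) * Gpoly S le z y)"
    by (intro sum.cong refl arg_cong2[where f="(*)"]) (use zeq in blast)+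
  have "Gpoly S le x y = Gf (Suc k) S le x y" unfolding Gpoly_def k ..
  also have "\<dots> = (if r x y = 0 then 1 else tau_half (r x y)
             ([:1, -1:] * (\<Sum>z\<in>I x y - {x}. [:-1, 1:] ^ (r x z - 1) * Gf k S le z y)))"
    by (simp only: Gf.simps)
  finally show ?thesis unfolding eq .
qed

lemma Bf_fuel:
  assumes xS: "x \<in> S"
  shows "y \<in> S \<Longrightarrow> le x y \<Longrightarrow> card (I x y) \<le> n \<Longrightarrow> card (I x y) \<le> m \<Longrightarrow>
    Bf n S le x y = Bf m S le x y"
proof (induction n arbitrary: m y)
  case 0
  then show ?case using card_itv_pos[OF xS] by fastforce
next
  case (Suc n)
  obtain m' where m: "m = Suc m'" using Suc.prems card_itv_pos[OF xS] by (cases m) fastforce+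
  have zeq: "Bf n S le x z = Bf m' S le x z" if z: "z \<in> I x y - {y}" for z
  proof -
    have "card (I x z) < card (I x y)" using card_lt_left[OF xS Suc.prems(1,2) z] .
    moreover have "z \<in> S" "le x z" using z by (auto simp: itv_def)
    ultimately show ?thesis using Suc.IH[of z m'] Suc.prems m by simp
  qed
  have eq: "(\<Sum>z\<in>I x y - {y}. Bf n S le x z * hom_uv (r z y) (Gpoly S le z y))
     = (\<Sum>z\<in>I x y - {y}. Bf m' S le x z * hom_uv (r z y) (Gpoly S le z y))"
    by (intro sum.cong refl arg_cong2[where f="(*)"]) (use zeq in blast)+
  show ?case unfolding m Bf.simps eq ..
qed

lemma Bpoly_unf:
  assumes xS: "x \<in> S" and yS: "y \<in> S" and xy: "le x y"
  shows "Bpoly S le x y = (if r x y = 0 then 1 else subst_uv (Gpoly S le x y)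
           - (\<Sum>z\<in>I x y - {y}. Bpoly S le x z * hom_uv (r z y) (Gpoly S le z y)))"
proof -
  obtain k where k: "card S = Suc k" using card_itv_S[of x y] card_itv_pos[OF xS xy]
    by (cases "card S") auto
  have zeq: "Bf k S le x z = Bpoly S le x z" if z: "z \<in> I x y - {y}" for z
  proof -
    have "card (I x z) < card (I x y)" using card_lt_left[OF xS yS xy z] .
    hence "card (I x z) \<le> k" using card_itv_S[of x y] k by simp
    moreover have "z \<in> S" "le x z" using z by (auto simp: itv_def)
    ultimately show ?thesis unfolding Bpoly_def k using Bf_fuel[OF xS, of z k "Suc k"] by linarith
  qed
  have eq: "(\<Sum>z\<in>I x y - {y}. Bf k S le x z * hom_uv (r z y) (Gpoly S le z y))
     = (\<Sum>z\<in>I x y - {y}. Bpoly S le x z * hom_uv (r z y) (Gpoly S le z y))"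
    by (intro sum.cong refl arg_cong2[where f="(*)"]) (use zeq in blast)+
  have "Bpoly S le x y = Bf (Suc k) S le x y" unfolding Bpoly_def k ..
  also have "\<dots> = (if r x y = 0 then 1 else subst_uv (Gpoly S le x y)
           - (\<Sum>z\<in>I x y - {y}. Bf k S le x z * hom_uv (r z y) (Gpoly S le z y)))"
    by (simp only: Bf.simps)
  finally show ?thesis unfolding eq .
qed

end

lemma mp_add:
  fixes f :: "'a::comm_ring_1 \<Rightarrow> 'b::comm_ring_1"
  assumes f0: "f 0 = 0" and fa: "\<And>a b. f (a + b) = f a + f b"
  shows "map_poly f (p + q) = map_poly f p + map_poly f q"
  by (rule poly_eqI) (simp add: coeff_map_poly f0 fa)

lemma mp_neg:
  fixes f :: "'a::comm_ring_1 \<Rightarrow> 'b::comm_ring_1"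
  assumes f0: "f 0 = 0" and fa: "\<And>a b. f (a + b) = f a + f b"
  shows "map_poly f (- p) = - map_poly f p"
proof -
  have fn: "f (- a) = - f a" for a
  proof -
    have "f (- a) + f a = 0" using fa[of "-a" a] f0 by simp
    thus ?thesis by (simp add: eq_neg_iff_add_eq_0)
  qed
  show ?thesis by (rule poly_eqI) (simp add: coeff_map_poly f0 fn)
qed

lemma mp_mult:
  fixes f :: "'a::comm_ring_1 \<Rightarrow> 'b::comm_ring_1"
  assumes f0: "f 0 = 0" and fa: "\<And>a b. f (a + b) = f a + f b" and fm: "\<And>a b. f (a * b) = f a * f b"
  shows "map_poly f (p * q) = map_poly f p * map_poly f q"
proof (induction p)
  case 0
  then show ?case by (simp add: f0)
next
  case (pCons a p)
  have "map_poly f (pCons a p * q) = map_poly f (smult a q) + map_poly f (pCons 0 (p * q))"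
    by (simp add: mp_add[OF f0 fa])
  also have "\<dots> = smult (f a) (map_poly f q) + pCons 0 (map_poly f p * map_poly f q)"
    by (simp add: map_poly_smult[OF f0 fm] map_poly_pCons[of f, OF f0] f0 pCons.IH)
  also have "\<dots> = map_poly f (pCons a p) * map_poly f q"
    by (simp add: map_poly_pCons[of f, OF f0])
  finally show ?case .
qed

definition ev :: "int poly \<Rightarrow> real \<Rightarrow> real" where
  "ev p t = poly (map_poly of_int p) t"

lemma ev_add[simp]: "ev (p + q) t = ev p t + ev q t"
  unfolding ev_def by (simp add: mp_add)
lemma ev_neg[simp]: "ev (- p) t = - ev p t"
  unfolding ev_def by (simp add: mp_neg)
lemma ev_diff[simp]: "ev (p - q) t = ev p t - ev q t"
  using ev_add[of p "- q" t] ev_neg[of q t] by simp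
lemma ev_mult[simp]: "ev (p * q) t = ev p t * ev q t"
  unfolding ev_def by (simp add: mp_mult)
lemma ev_1[simp]: "ev 1 t = 1"
  unfolding ev_def by simp
lemma ev_0[simp]: "ev 0 t = 0"
  unfolding ev_def by simp
lemma ev_power[simp]: "ev (p ^ n) t = ev p t ^ n"
  by (induction n) auto
lemma ev_sum[simp]: "ev (\<Sum>i\<in>A. f i) t = (\<Sum>i\<in>A. ev (f i) t)"
  by (induction A rule: infinite_finite_induct) auto
lemma ev_pCons[simp]: "ev (pCons a p) t = of_int a + t * ev p t"
  unfolding ev_def by (simp add: map_poly_pCons)
lemma ev_monom[simp]: "ev (monom c n) t = of_int c * t ^ n"
  unfolding ev_def by (simp add: map_poly_monom poly_monom)

lemma ev_altdef:
  assumes "degree p \<le> n"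
  shows "ev p t = (\<Sum>i\<le>n. of_int (coeff p i) * t ^ i)"
proof -
  have "ev p t = (\<Sum>i\<le>degree p. of_int (coeff p i) * t ^ i)"
    unfolding ev_def by (simp add: poly_altdef degree_map_poly coeff_map_poly)
  also have "\<dots> = (\<Sum>i\<le>n. of_int (coeff p i) * t ^ i)"
    by (rule sum.mono_neutral_left) (use assms in \<open>auto simp: coeff_eq_0\<close>)
  finally show ?thesis .
qed

lemma ev_eq0:
  assumes "\<And>t. t \<noteq> 0 \<Longrightarrow> ev p t = 0"
  shows "p = 0"
proof (rule ccontr)
  assume "p \<noteq> 0"
  hence "map_poly (of_int :: int \<Rightarrow> real) p \<noteq> 0" by (simp add: map_poly_eq_0_iff)
  hence "finite {t. poly (map_poly (of_int :: int \<Rightarrow> real) p) t = 0}" by (rule poly_roots_finite)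
  moreover have "{t::real. t \<noteq> 0} \<subseteq> {t. poly (map_poly (of_int :: int \<Rightarrow> real) p) t = 0}"
    using assms unfolding ev_def by auto
  ultimately have "finite {t::real. t \<noteq> 0}" by (rule finite_subset[rotated])
  moreover have "infinite {t::real. t \<noteq> 0}"
  proof
    assume "finite {t::real. t \<noteq> 0}"
    hence "finite (insert 0 {t::real. t \<noteq> 0})" by simp
    moreover have "insert 0 {t::real. t \<noteq> 0} = UNIV" by auto
    ultimately show False using infinite_UNIV_char_0 by metis
  qed
  ultimately show False by simp
qed

lemma eval_uv_ev: "eval_uv P u v = poly (map_poly (\<lambda>c. ev c u) P) v"
  unfolding eval_uv_def ev_def ..

lemma eu_add[simp]: "eval_uv (P + Q) u v = eval_uv P u v + eval_uv Q u v"
  unfolding eval_uv_ev by (simp add: mp_add)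
lemma eu_neg[simp]: "eval_uv (- P) u v = - eval_uv P u v"
  unfolding eval_uv_ev by (simp add: mp_neg)
lemma eu_diff[simp]: "eval_uv (P - Q) u v = eval_uv P u v - eval_uv Q u v"
  using eu_add[of P "- Q" u v] eu_neg[of Q u v] by simp
lemma eu_mult[simp]: "eval_uv (P * Q) u v = eval_uv P u v * eval_uv Q u v"
  unfolding eval_uv_ev by (simp add: mp_mult)
lemma eu_1[simp]: "eval_uv 1 u v = 1"
  unfolding eval_uv_ev by simp
lemma eu_0[simp]: "eval_uv 0 u v = 0"
  unfolding eval_uv_ev by simp
lemma eu_power[simp]: "eval_uv (P ^ n) u v = eval_uv P u v ^ n"
  by (induction n) auto
lemma eu_sum[simp]: "eval_uv (\<Sum>i\<in>A. f i) u v = (\<Sum>i\<in>A. eval_uv (f i) u v)"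
  by (induction A rule: infinite_finite_induct) auto
lemma eu_const[simp]: "eval_uv [:[:c:]:] u v = of_int c"
  unfolding eval_uv_ev by (simp add: map_poly_pCons)
lemma eu_U[simp]: "eval_uv varU u v = u"
  unfolding eval_uv_ev varU_def by (simp add: map_poly_pCons)
lemma eu_V[simp]: "eval_uv varV u v = v"
  unfolding eval_uv_ev varV_def by (simp add: map_poly_pCons)

lemma eu_pconst: "eval_uv [:c:] u v = ev c u"
  unfolding eval_uv_ev by (simp add: map_poly_pCons)
lemma eu_smult[simp]: "eval_uv (smult c P) u v = ev c u * eval_uv P u v"
proof -
  have "smult c P = [:c:] * P" by simp
  thus ?thesis by (simp only: eu_mult eu_pconst)
qed
lemma ev_const[simp]: "ev [:c:] t = of_int c"
  by simp

lemma eu_subst: "eval_uv (subst_uv g) u v = ev g (u * v)"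
  unfolding subst_uv_def by (simp add: ev_altdef[of g "degree g"])

lemma eu_hom:
  assumes "degree g \<le> m" "u \<noteq> 0"
  shows "eval_uv (hom_uv m g) u v = u ^ m * ev g (v / u)"
proof -
  have "eval_uv (hom_uv m g) u v = (\<Sum>i\<le>degree g. of_int (coeff g i) * u ^ (m - i) * v ^ i)"
    unfolding hom_uv_def by (simp add: mult.assoc)
  also have "\<dots> = (\<Sum>i\<le>degree g. u ^ m * (of_int (coeff g i) * (v / u) ^ i))"
  proof (rule sum.cong[OF refl])
    fix i assume "i \<in> {..degree g}"
    hence i: "i \<le> m" using assms(1) by simp
    have "u ^ m = u ^ (m - i) * u ^ i" using i by (simp add: power_add[symmetric])
    thus "of_int (coeff g i) * u ^ (m - i) * v ^ i = u ^ m * (of_int (coeff g i) * (v / u) ^ i)"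
      using assms(2) by (simp add: power_divide field_simps)
  qed
  also have "\<dots> = u ^ m * ev g (v / u)"
    by (simp add: ev_altdef[of g "degree g"] sum_distrib_left)
  finally show ?thesis .
qed

lemma sum_if_rev:
  fixes e j :: nat
  assumes "j \<le> e"
  shows "(\<Sum>i\<le>e. if e - i = j then (c i::'a::comm_monoid_add) else 0) = c (e - j)"
proof -
  have "(\<Sum>i\<le>e. if e - i = j then c i else 0) = (\<Sum>i\<le>e. if i = e - j then c i else 0)"
  proof (rule sum.cong[OF refl])
    fix i assume "i \<in> {..e}"
    hence "i \<le> e" by simp
    hence "(e - i = j) \<longleftrightarrow> (i = e - j)" using assms by arith
    thus "(if e - i = j then c i else 0) = (if i = e - j then c i else 0)" by simp
  qed
  also have "\<dots> = c (e - j)" by (subst sum.delta) auto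
  finally show ?thesis .
qed

lemma antisym_coeffs:
  fixes A :: "int poly"
  assumes deg: "degree A \<le> e" and f: "\<And>t. t \<noteq> 0 \<Longrightarrow> t ^ e * ev A (1 / t) = - ev A t"
  shows "j \<le> e \<Longrightarrow> coeff A (e - j) = - coeff A j"
proof -
  assume j: "j \<le> e"
  define Q where "Q = (\<Sum>i\<le>e. monom (coeff A i) (e - i)) + A"
  have "ev Q t = 0" if t: "t \<noteq> 0" for t
  proof -
    have "t ^ e * ev A (1 / t) = (\<Sum>i\<le>e. of_int (coeff A i) * t ^ (e - i))"
    proof -
      have "t ^ e * ev A (1 / t) = (\<Sum>i\<le>e. t ^ e * (of_int (coeff A i) * (1 / t) ^ i))"
        by (simp add: ev_altdef[OF deg] sum_distrib_left)
      also have "\<dots> = (\<Sum>i\<le>e. of_int (coeff A i) * t ^ (e - i))"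
      proof (rule sum.cong[OF refl])
        fix i assume "i \<in> {..e}"
        hence "t ^ e = t ^ (e - i) * t ^ i" by (simp add: power_add[symmetric])
        thus "t ^ e * (of_int (coeff A i) * (1 / t) ^ i) = of_int (coeff A i) * t ^ (e - i)"
          using t by (simp add: power_one_over field_simps)
      qed
      finally show ?thesis .
    qed
    hence "ev (\<Sum>i\<le>e. monom (coeff A i) (e - i)) t = - ev A t" using f[OF t] by simp
    thus ?thesis unfolding Q_def by simp
  qed
  hence "Q = 0" by (rule ev_eq0)
  hence "coeff Q j = 0" by simp
  moreover have "coeff Q j = coeff A (e - j) + coeff A j"
    unfolding Q_def by (simp add: coeff_sum sum_if_rev[OF j])
  ultimately show ?thesis by simp
qed

lemma tau_rev:
  fixes A :: "int poly"
  assumes deg: "degree A \<le> e" and asym: "\<And>j. j \<le> e \<Longrightarrow> coeff A (e - j) = - coeff A j"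
    and t: "t \<noteq> 0"
  shows "t ^ e * ev (tau_half e (- A)) (1 / t) = ev (tau_half e (- A)) t + ev A t"
proof -
  define J where "J = {i. 2 * i < e}"
  have finJ: "finite J" unfolding J_def by (rule finite_subset[of _ "{..<e}"]) auto
  have Jlt: "i \<in> J \<Longrightarrow> i < e" for i unfolding J_def by auto
  define Rv where "Rv = (\<Sum>i\<in>J. monom (- coeff A i) (e - i))"
  have tau: "tau_half e (- A) = (\<Sum>i\<in>J. monom (- coeff A i) i)"
    unfolding tau_half_def J_def by simp
  have 1: "ev Rv t = t ^ e * ev (tau_half e (- A)) (1 / t)"
    unfolding Rv_def tau
  proof (simp add: sum_distrib_left, rule sum.cong[OF refl])
    fix i assume i: "i \<in> J"
    hence "t ^ e = t ^ (e - i) * t ^ i" using Jlt[OF i] by (simp add: power_add[symmetric])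
    thus "- (of_int (coeff A i) * t ^ (e - i)) = - (t ^ e * (of_int (coeff A i) * (1 / t) ^ i))"
      using t by (simp add: power_one_over field_simps)
  qed
  have cR: "coeff Rv j = (if j \<le> e \<and> e - j \<in> J then - coeff A (e - j) else 0)" for j
  proof -
    have "coeff Rv j = (\<Sum>i\<in>J. if e - i = j then - coeff A i else 0)"
      unfolding Rv_def by (simp add: coeff_sum)
    also have "\<dots> = (\<Sum>i\<in>J. if i = e - j \<and> j \<le> e then - coeff A i else 0)"
    proof (rule sum.cong[OF refl])
      fix i assume "i \<in> J"
      hence "i < e" by (rule Jlt)
      hence "(e - i = j) \<longleftrightarrow> (i = e - j \<and> j \<le> e)" by arith
      thus "(if e - i = j then - coeff A i else 0) = (if i = e - j \<and> j \<le> e then - coeff A i else 0)"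
        by simp
    qed
    also have "\<dots> = (if j \<le> e \<and> e - j \<in> J then - coeff A (e - j) else 0)"
    proof (cases "j \<le> e")
      case True
      then show ?thesis using finJ by (simp add: sum.delta)
    next
      case False
      then show ?thesis by simp
    qed
    finally show ?thesis .
  qed
  have cT: "coeff (tau_half e (- A)) j = (if j \<in> J then - coeff A j else 0)" for j
    unfolding tau by (simp add: coeff_sum finJ sum.delta')
  have 2: "Rv = tau_half e (- A) + A"
  proof (rule poly_eqI)
    fix j
    show "coeff Rv j = coeff (tau_half e (- A) + A) j"
    proof (cases "j \<le> e")
      case False
      hence "coeff A j = 0" using deg by (simp add: coeff_eq_0)
      moreover have "j \<notin> J" using False Jlt by force
      ultimately show ?thesis using False by (simp add: cR cT)
    next
      case True
      note as = asym[OF True]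
      consider "2 * j < e" | "2 * j = e" | "2 * j > e" by linarith
      then show ?thesis
      proof cases
        case 1
        hence "e - j \<notin> J" "j \<in> J" unfolding J_def by auto
        then show ?thesis using True by (simp add: cR cT)
      next
        case 2
        hence "e - j = j" by simp
        hence "coeff A j = 0" using as by simp
        moreover have "e - j \<notin> J" "j \<notin> J" using 2 unfolding J_def by auto
        ultimately show ?thesis using True by (simp add: cR cT)
      next
        case 3
        hence "e - j \<in> J" "j \<notin> J" using True unfolding J_def by auto
        then show ?thesis using True as by (simp add: cR cT)
      qed
    qed
  qed
  show ?thesis using 1 2 by simp
qed

context eul
begin

abbreviation g where "g x y t \<equiv> ev (Gpoly S le x y) t"

lemma finite_half: "finite {i::nat. 2 * i < e}"
  by (rule finite_subset[of _ "{..<e}"]) auto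

lemma deg_tau: "degree (tau_half e p) \<le> e"
  unfolding tau_half_def
proof (rule degree_sum_le[OF finite_half])
  fix i assume "i \<in> {i. 2 * i < e}"
  hence "i \<le> e" by simp
  thus "degree (monom (coeff p i) i) \<le> e" using degree_monom_le order_trans by blast
qed

lemma deg_G:
  assumes "x \<in> S" "y \<in> S" "le x y"
  shows "degree (Gpoly S le x y) \<le> r x y"
  using Gpoly_unf[OF assms] deg_tau by simp

lemma itv_memE: "z \<in> I x y \<Longrightarrow> z \<in> S \<and> le x z \<and> le z y" by (simp add: itv_def)

lemma swap:
  assumes xS: "x \<in> S" and yS: "y \<in> S" and xy: "le x y"
  shows "(\<Sum>z\<in>I x y. \<Sum>w\<in>I z y. f z w) = (\<Sum>w\<in>I x y. \<Sum>z\<in>I x w. f z w)"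
proof -
  have A: "{w \<in> I x y. le z w} = I z y" if z: "z \<in> I x y" for z
    using z xS trans[of x z] unfolding itv_def by blast
  have B: "{z \<in> I x y. le z w} = I x w" if w: "w \<in> I x y" for w
    using w yS trans[of _ w y] unfolding itv_def by blast
  have "(\<Sum>z\<in>I x y. \<Sum>w\<in>I z y. f z w) = (\<Sum>z\<in>I x y. \<Sum>w\<in>{w \<in> I x y. le z w}. f z w)"
    by (rule sum.cong[OF refl]) (simp add: A)
  also have "\<dots> = (\<Sum>w\<in>I x y. \<Sum>z\<in>{z \<in> I x y. le z w}. f z w)"
    by (rule sum.swap_restrict[OF fin_itv fin_itv])
  also have "\<dots> = (\<Sum>w\<in>I x y. \<Sum>z\<in>I x w. f z w)"
    by (rule sum.cong[OF refl]) (simp add: B)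
  finally show ?thesis .
qed

lemma sum_sign_real:
  assumes "x \<in> S" "y \<in> S" "le x y" "x \<noteq> y"
  shows "(\<Sum>z\<in>I x y. (-1::real) ^ r x z) = 0"
proof -
  have "(\<Sum>z\<in>I x y. (-1::real) ^ r x z) = of_int (\<Sum>z\<in>I x y. (-1::int) ^ r x z)" by simp
  thus ?thesis using sum_sign[OF assms] by simp
qed

lemma delta:
  assumes xS: "x \<in> S" and wS: "w \<in> S" and xw: "le x w"
  shows "(\<Sum>z\<in>I x w. (1 - t) ^ r x z * (t - 1) ^ r z w) = (if x = w then 1 else (0::real))"
proof (cases "x = w")
  case True
  then show ?thesis using itv_single[OF xS] rk_refl[OF xS] by simp
next
  case False
  have "(\<Sum>z\<in>I x w. (1 - t) ^ r x z * (t - 1) ^ r z w) = (\<Sum>z\<in>I x w. (t - 1) ^ r x w * (-1) ^ r x z)"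
  proof (rule sum.cong[OF refl])
    fix z assume z: "z \<in> I x w"
    hence "z \<in> S" "le x z" "le z w" by (auto simp: itv_def)
    hence rr: "r x w = r x z + r z w" using rk_add[OF xS _ wS] by blast
    have "(1 - t) ^ r x z = (-1) ^ r x z * (t - 1) ^ r x z"
      by (metis minus_diff_eq power_minus)
    thus "(1 - t) ^ r x z * (t - 1) ^ r z w = (t - 1) ^ r x w * (-1) ^ r x z"
      unfolding rr by (simp add: power_add)
  qed
  also have "\<dots> = (t - 1) ^ r x w * (\<Sum>z\<in>I x w. (-1) ^ r x z)" by (simp add: sum_distrib_left)
  also have "\<dots> = 0" using sum_sign_real[OF xS wS xw False] by simp
  finally show ?thesis using False by simp
qed

definition Ap where "Ap x y = (\<Sum>z\<in>I x y - {x}. [:-1, 1:] ^ r x z * Gpoly S le z y)"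

lemma rk_pos:
  assumes "x \<in> S" "z \<in> I x y - {x}"
  shows "r x z \<ge> 1"
proof -
  have "z \<in> S" "le x z" "z \<noteq> x" using assms by (auto simp: itv_def)
  thus ?thesis using rk0[OF assms(1), of z] by auto
qed

lemma G_tau:
  assumes xS: "x \<in> S" and yS: "y \<in> S" and xy: "le x y" and pos: "r x y \<noteq> 0"
  shows "Gpoly S le x y = tau_half (r x y) (- Ap x y)"
proof -
  have "[:1, -1:] * (\<Sum>z\<in>I x y - {x}. [:-1, 1:] ^ (r x z - 1) * Gpoly S le z y) = - Ap x y"
    unfolding Ap_def sum_distrib_left sum_negf[symmetric]
  proof (rule sum.cong[OF refl])
    fix z assume z: "z \<in> I x y - {x}"
    have k: "r x z \<ge> 1" using rk_pos[OF xS z] .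
    have gen: "- L * (L ^ (k - 1) * G) = - (L ^ k * G)" if k1: "k \<ge> 1" for L G :: "int poly" and k :: nat
    proof -
      obtain k' where "k = Suc k'" using k1 by (cases k) auto
      thus ?thesis by (simp add: mult.assoc)
    qed
    have "[:1, -1:] = - [:-1, (1::int):]" by simp
    thus "[:1, -1:] * ([:-1, 1:] ^ (r x z - 1) * Gpoly S le z y) =
          - ([:-1, 1:] ^ r x z * Gpoly S le z y)" using gen[OF k] by (simp only:)
  qed
  thus ?thesis using Gpoly_unf[OF xS yS xy] pos by simp
qed

lemma deg_Ap:
  assumes xS: "x \<in> S" and yS: "y \<in> S" and xy: "le x y"
  shows "degree (Ap x y) \<le> r x y"
  unfolding Ap_def
proof (rule degree_sum_le[OF finite_Diff[OF fin_itv]])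
  fix z assume z: "z \<in> I x y - {x}"
  hence zz: "z \<in> S" "le x z" "le z y" by (auto simp: itv_def)
  have "degree ([:-1, 1:] ^ r x z * Gpoly S le z y) \<le> degree ([:-1, 1::int:] ^ r x z) + degree (Gpoly S le z y)"
    by (rule degree_mult_le)
  also have "\<dots> \<le> r x z + r z y"
    using degree_power_le[of "[:-1, 1::int:]" "r x z"] deg_G[OF zz(1) yS zz(3)] by simp
  also have "\<dots> = r x y" using rk_add[OF xS zz(1) yS zz(2,3)] by simp
  finally show "degree ([:-1, 1:] ^ r x z * Gpoly S le z y) \<le> r x y" .
qed

lemma ev_lin[simp]: "ev [:-1, 1:] t = t - 1"
  by simp

end

lemma sum_if_remove:
  assumes "finite A"
  shows "(\<Sum>z\<in>A. if z = x then 0 else F z) = (\<Sum>z\<in>A - {x}. F z)"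
proof -
  have "(\<Sum>z\<in>A. if z = x then 0 else F z) = (\<Sum>z\<in>A - {x}. if z = x then 0 else F z)"
    by (rule sum.mono_neutral_right) (use assms in auto)
  also have "\<dots> = (\<Sum>z\<in>A - {x}. F z)" by (rule sum.cong) auto
  finally show ?thesis .
qed

context eul
begin

lemma ev_Ap: "ev (Ap x y) t = (\<Sum>z\<in>I x y - {x}. (t - 1) ^ r x z * g z y t)"
  unfolding Ap_def by simp

lemma rhs_split:
  assumes xS: "x \<in> S" and xy: "le x y"
  shows "(\<Sum>w\<in>I x y. (t - 1) ^ r x w * g w y t) = g x y t + ev (Ap x y) t"
  using sum.remove[OF fin_itv left_in[OF xS xy], of "\<lambda>w. (t - 1) ^ r x w * g w y t"]
  by (simp add: ev_Ap rk_refl[OF xS])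

lemma KLS:
  assumes yS: "y \<in> S"
  shows "x \<in> S \<Longrightarrow> le x y \<Longrightarrow> t \<noteq> 0 \<Longrightarrow>
    t ^ r x y * g x y (1 / t) = (\<Sum>w\<in>I x y. (t - 1) ^ r x w * g w y t)"
proof (induction "r x y" arbitrary: x t rule: less_induct)
  case less
  note xS = less.prems(1) and xy = less.prems(2) and t0 = less.prems(3)
  show ?case
  proof (cases "r x y = 0")
    case True
    hence xy': "x = y" using rk0[OF xS yS xy] by simp
    have "Gpoly S le y y = 1" using Gpoly_unf[OF yS yS prefl[OF yS]] rk_refl[OF yS] by simp
    thus ?thesis using xy' itv_single[OF yS] rk_refl[OF yS] by simp
  next
    case False
    define e where "e = r x y"
    define A where "A = Ap x y"
    have IHz: "t' ^ r z y * g z y (1 / t') = (\<Sum>w\<in>I z y. (t' - 1) ^ r z w * g w y t')"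
      if z: "z \<in> I x y - {x}" and t': "t' \<noteq> 0" for z t'
    proof -
      have zz: "z \<in> S" "le x z" "le z y" using z by (auto simp: itv_def)
      have "r x y = r x z + r z y" using rk_add[OF xS zz(1) yS zz(2,3)] .
      hence "r z y < r x y" using rk_pos[OF xS z] by simp
      thus ?thesis using less.hyps[of z t'] zz t' by simp
    qed
    have fid: "t ^ e * ev A (1 / t) = - ev A t" if t: "t \<noteq> 0" for t
    proof -
      let ?I' = "I x y - {x}"
      have "t ^ e * ev A (1 / t) = (\<Sum>z\<in>?I'. t ^ e * ((1 / t - 1) ^ r x z * g z y (1 / t)))"
        unfolding A_def ev_Ap by (simp add: sum_distrib_left)
      also have "\<dots> = (\<Sum>z\<in>?I'. (1 - t) ^ r x z * (t ^ r z y * g z y (1 / t)))"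
      proof (rule sum.cong[OF refl])
        fix z assume z: "z \<in> ?I'"
        have zz: "z \<in> S" "le x z" "le z y" using z by (auto simp: itv_def)
        have ee: "t ^ e = t ^ r x z * t ^ r z y"
          unfolding e_def rk_add[OF xS zz(1) yS zz(2,3)] by (simp add: power_add)
        have tt: "t * (1 / t - 1) = 1 - t" using t by (simp add: field_simps)
        have "t ^ r x z * (1 / t - 1) ^ r x z = (1 - t) ^ r x z"
          unfolding power_mult_distrib[symmetric] tt ..
        moreover have "t ^ e * ((1 / t - 1) ^ r x z * g z y (1 / t)) =
            (t ^ r x z * (1 / t - 1) ^ r x z) * (t ^ r z y * g z y (1 / t))"
          unfolding ee by (simp only: mult_ac)
        ultimately show "t ^ e * ((1 / t - 1) ^ r x z * g z y (1 / t)) = (1 - t) ^ r x z * (t ^ r z y * g z y (1 / t))"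
          by simp
      qed
      also have "\<dots> = (\<Sum>z\<in>?I'. (1 - t) ^ r x z * (\<Sum>w\<in>I z y. (t - 1) ^ r z w * g w y t))"
        by (rule sum.cong[OF refl]) (simp add: IHz t)
      also have "\<dots> = (\<Sum>z\<in>I x y. \<Sum>w\<in>I z y. if z = x then 0 else (1 - t) ^ r x z * ((t - 1) ^ r z w * g w y t))"
        by (subst sum_if_remove[OF fin_itv, symmetric]) (rule sum.cong[OF refl], simp add: sum_distrib_left)
      also have "\<dots> = (\<Sum>w\<in>I x y. \<Sum>z\<in>I x w. if z = x then 0 else (1 - t) ^ r x z * ((t - 1) ^ r z w * g w y t))"
        by (rule swap[OF xS yS xy])
      also have "\<dots> = (\<Sum>w\<in>I x y. g w y t * ((if x = w then 1 else 0) - (t - 1) ^ r x w))"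
      proof (rule sum.cong[OF refl])
        fix w assume w: "w \<in> I x y"
        have ww: "w \<in> S" "le x w" "le w y" using w by (auto simp: itv_def)
        have "(\<Sum>z\<in>I x w. if z = x then 0 else (1 - t) ^ r x z * ((t - 1) ^ r z w * g w y t))
            = (\<Sum>z\<in>I x w - {x}. (1 - t) ^ r x z * ((t - 1) ^ r z w * g w y t))"
          by (rule sum_if_remove[OF fin_itv])
        also have "\<dots> = g w y t * (\<Sum>z\<in>I x w - {x}. (1 - t) ^ r x z * (t - 1) ^ r z w)"
          by (simp add: sum_distrib_left mult_ac)
        also have "(\<Sum>z\<in>I x w - {x}. (1 - t) ^ r x z * (t - 1) ^ r z w) = (if x = w then 1 else 0) - (t - 1) ^ r x w"
          using sum.remove[OF fin_itv left_in[OF xS ww(2)], of "\<lambda>z. (1 - t) ^ r x z * (t - 1) ^ r z w"]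
            delta[OF xS ww(1,2), of t] rk_refl[OF xS] by simp
        finally show "(\<Sum>z\<in>I x w. if z = x then 0 else (1 - t) ^ r x z * ((t - 1) ^ r z w * g w y t))
            = g w y t * ((if x = w then 1 else 0) - (t - 1) ^ r x w)" .
      qed
      also have "\<dots> = (\<Sum>w\<in>I x y. if x = w then g w y t else 0) - (\<Sum>w\<in>I x y. (t - 1) ^ r x w * g w y t)"
        unfolding sum_subtractf[symmetric]
        by (rule sum.cong[OF refl]) (simp add: right_diff_distrib mult_ac)
      also have "\<dots> = g x y t - (g x y t + ev A t)"
        using left_in[OF xS xy] rhs_split[OF xS xy, of t] unfolding A_def by (simp add: sum.delta fin_itv)
      finally show ?thesis by simp
    qed
    have degA: "degree A \<le> e" unfolding A_def e_def by (rule deg_Ap[OF xS yS xy])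
    have asym: "coeff A (e - j) = - coeff A j" if "j \<le> e" for j
      by (rule antisym_coeffs[OF degA fid that]) 
    have G: "Gpoly S le x y = tau_half e (- A)" unfolding A_def e_def by (rule G_tau[OF xS yS xy False])
    have "t ^ e * g x y (1 / t) = g x y t + ev A t"
      unfolding G by (rule tau_rev[OF degA asym t0])
    thus ?thesis using rhs_split[OF xS xy, of t] unfolding e_def A_def by simp
  qed
qed

end

context eul
begin

lemma G_refl: "y \<in> S \<Longrightarrow> Gpoly S le y y = 1"
  using Gpoly_unf[of y y] prefl rk_refl by simp

lemma B_refl: "y \<in> S \<Longrightarrow> Bpoly S le y y = 1"
  using Bpoly_unf[of y y] prefl rk_refl by simp

lemma Brel:
  assumes xS: "x \<in> S" and yS: "y \<in> S" and xy: "le x y" and u0: "u \<noteq> 0"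
  shows "(\<Sum>z\<in>I x y. eval_uv (Bpoly S le x z) u v * (u ^ r z y * g z y (v / u))) = g x y (u * v)"
proof (cases "x = y")
  case True
  then show ?thesis using itv_single[OF yS] B_refl[OF yS] G_refl[OF yS] rk_refl[OF yS] by simp
next
  case False
  hence r0: "r x y \<noteq> 0" using rk0[OF xS yS xy] by simp
  have hom: "eval_uv (hom_uv (r z y) (Gpoly S le z y)) u v = u ^ r z y * g z y (v / u)"
    if z: "z \<in> I x y - {y}" for z
  proof -
    have "z \<in> S" "le z y" using z by (auto simp: itv_def)
    thus ?thesis using eu_hom[OF deg_G[of z y] u0] yS by simp
  qed
  have Bxy: "eval_uv (Bpoly S le x y) u v = g x y (u * v)
      - (\<Sum>z\<in>I x y - {y}. eval_uv (Bpoly S le x z) u v * (u ^ r z y * g z y (v / u)))"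
    using Bpoly_unf[OF xS yS xy] r0 by (simp add: eu_subst hom)
  have "(\<Sum>z\<in>I x y. eval_uv (Bpoly S le x z) u v * (u ^ r z y * g z y (v / u)))
     = eval_uv (Bpoly S le x y) u v * (u ^ r y y * g y y (v / u))
       + (\<Sum>z\<in>I x y - {y}. eval_uv (Bpoly S le x z) u v * (u ^ r z y * g z y (v / u)))"
    by (rule sum.remove[OF fin_itv right_in[OF yS xy]])
  also have "\<dots> = g x y (u * v)" using Bxy G_refl[OF yS] rk_refl[OF yS] by simp
  finally show ?thesis .
qed

lemma main:
  fixes u v :: real
  assumes u0: "u \<noteq> 0" and v0: "v \<noteq> 0"
  shows "(\<Sum>x\<in>S. eval_uv (Bpoly S le zero x) (1 / u) (1 / v) * (u * v) ^ (r zero x)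
                   * (v - u) ^ (d - r zero x))
       = (\<Sum>x\<in>S. eval_uv (Bpoly S le x one) u v * (u * v - 1) ^ (r zero x))"
proof -
  define b where "b z w = eval_uv (Bpoly S le z w) u v" for z w
  define b' where "b' z w = eval_uv (Bpoly S le z w) (1 / u) (1 / v) * (u * v) ^ r z w" for z w
  define \<Gamma> where "\<Gamma> z w = u ^ r z w * g z w (v / u)" for z w
  define L where "L x w = (\<Sum>z\<in>I x w. b' x z * (v - u) ^ r z w)" for x w
  define R where "R x w = (\<Sum>z\<in>I x w. (u * v - 1) ^ r x z * b z w)" for x w
  have uv0: "u * v \<noteq> 0" using u0 v0 by simp
  have a: "(\<Sum>z\<in>I x y. b' x z * (v ^ r z y * g z y (u / v))) = (u * v) ^ r x y * g x y (1 / (u * v))"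
    if xS: "x \<in> S" and yS: "y \<in> S" and xy: "le x y" for x y
  proof -
    have "(u * v) ^ r x y * g x y (1 / (u * v)) = (u * v) ^ r x y * g x y ((1 / u) * (1 / v))" by simp
    also have "\<dots> = (u * v) ^ r x y * (\<Sum>z\<in>I x y. eval_uv (Bpoly S le x z) (1 / u) (1 / v)
                      * ((1 / u) ^ r z y * g z y ((1 / v) / (1 / u))))"
      using Brel[OF xS yS xy, of "1 / u" "1 / v"] u0 by simp
    also have "\<dots> = (\<Sum>z\<in>I x y. b' x z * (v ^ r z y * g z y (u / v)))"
      unfolding sum_distrib_left
    proof (rule sum.cong[OF refl])
      fix z assume z: "z \<in> I x y"
      have zz: "z \<in> S" "le x z" "le z y" using z by (auto simp: itv_def)
      have rr: "(u * v) ^ r x y = (u * v) ^ r x z * (u * v) ^ r z y"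
        unfolding rk_add[OF xS zz(1) yS zz(2,3)] by (simp add: power_add)
      have q: "(1 / v) / (1 / u) = u / v" using u0 v0 by simp
      have p: "(u * v) ^ r z y * (1 / u) ^ r z y = v ^ r z y"
        unfolding power_mult_distrib[symmetric] using u0 by simp
      show "(u * v) ^ r x y * (eval_uv (Bpoly S le x z) (1 / u) (1 / v) * ((1 / u) ^ r z y * g z y ((1 / v) / (1 / u))))
          = b' x z * (v ^ r z y * g z y (u / v))"
        unfolding b'_def rr q p[symmetric] by (simp only: mult_ac)
    qed
    finally show ?thesis by simp
  qed
  have b: "v ^ r z y * g z y (u / v) = (\<Sum>w\<in>I z y. (v - u) ^ r z w * \<Gamma> w y)"
    if zS: "z \<in> S" and yS: "y \<in> S" and zy: "le z y" for z y
  proof -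
    have t0: "v / u \<noteq> 0" using u0 v0 by simp
    have "v ^ r z y * g z y (u / v) = u ^ r z y * ((v / u) ^ r z y * g z y (1 / (v / u)))"
      using u0 by (simp add: power_divide)
    also have "\<dots> = u ^ r z y * (\<Sum>w\<in>I z y. (v / u - 1) ^ r z w * g w y (v / u))"
      using KLS[OF yS zS zy t0] by simp
    also have "\<dots> = (\<Sum>w\<in>I z y. (v - u) ^ r z w * \<Gamma> w y)"
      unfolding sum_distrib_left
    proof (rule sum.cong[OF refl])
      fix w assume w: "w \<in> I z y"
      have ww: "w \<in> S" "le z w" "le w y" using w by (auto simp: itv_def)
      have rr: "u ^ r z y = u ^ r z w * u ^ r w y"
        unfolding rk_add[OF zS ww(1) yS ww(2,3)] by (simp add: power_add)
      have pp: "u * (v / u - 1) = v - u" using u0 by (simp add: field_simps)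
      have p: "u ^ r z w * (v / u - 1) ^ r z w = (v - u) ^ r z w"
        unfolding power_mult_distrib[symmetric] pp ..
      show "u ^ r z y * ((v / u - 1) ^ r z w * g w y (v / u)) = (v - u) ^ r z w * \<Gamma> w y"
        unfolding \<Gamma>_def rr p[symmetric] by (simp only: mult_ac)
    qed
    finally show ?thesis .
  qed
  have c: "(u * v) ^ r x y * g x y (1 / (u * v)) = (\<Sum>w\<in>I x y. (u * v - 1) ^ r x w * (\<Sum>z\<in>I w y. b w z * \<Gamma> z y))"
    if xS: "x \<in> S" and yS: "y \<in> S" and xy: "le x y" for x y
  proof -
    have "(u * v) ^ r x y * g x y (1 / (u * v)) = (\<Sum>w\<in>I x y. (u * v - 1) ^ r x w * g w y (u * v))"
      by (rule KLS[OF yS xS xy uv0])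
    also have "\<dots> = (\<Sum>w\<in>I x y. (u * v - 1) ^ r x w * (\<Sum>z\<in>I w y. b w z * \<Gamma> z y))"
    proof (rule sum.cong[OF refl])
      fix w assume w: "w \<in> I x y"
      have ww: "w \<in> S" "le w y" using w by (auto simp: itv_def)
      show "(u * v - 1) ^ r x w * g w y (u * v) = (u * v - 1) ^ r x w * (\<Sum>z\<in>I w y. b w z * \<Gamma> z y)"
        using Brel[OF ww(1) yS ww(2) u0, of v] unfolding b_def \<Gamma>_def by simp
    qed
    finally show ?thesis .
  qed
  have d: "(\<Sum>w\<in>I x y. L x w * \<Gamma> w y) = (\<Sum>w\<in>I x y. R x w * \<Gamma> w y)"
    if xS: "x \<in> S" and yS: "y \<in> S" and xy: "le x y" for x y
  proof -
    have "(\<Sum>w\<in>I x y. L x w * \<Gamma> w y) = (\<Sum>w\<in>I x y. \<Sum>z\<in>I x w. b' x z * ((v - u) ^ r z w * \<Gamma> w y))"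
      unfolding L_def sum_distrib_right by (simp add: mult_ac)
    also have "\<dots> = (\<Sum>z\<in>I x y. \<Sum>w\<in>I z y. b' x z * ((v - u) ^ r z w * \<Gamma> w y))"
      by (rule swap[OF xS yS xy, symmetric])
    also have "\<dots> = (\<Sum>z\<in>I x y. b' x z * (v ^ r z y * g z y (u / v)))"
    proof (rule sum.cong[OF refl])
      fix z assume z: "z \<in> I x y"
      have zz: "z \<in> S" "le z y" using z by (auto simp: itv_def)
      show "(\<Sum>w\<in>I z y. b' x z * ((v - u) ^ r z w * \<Gamma> w y)) = b' x z * (v ^ r z y * g z y (u / v))"
        using b[OF zz(1) yS zz(2)] by (simp add: sum_distrib_left)
    qed
    also have "\<dots> = (\<Sum>w\<in>I x y. (u * v - 1) ^ r x w * (\<Sum>z\<in>I w y. b w z * \<Gamma> z y))"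
      using a[OF xS yS xy] c[OF xS yS xy] by simp
    also have "\<dots> = (\<Sum>w\<in>I x y. \<Sum>z\<in>I w y. (u * v - 1) ^ r x w * b w z * \<Gamma> z y)"
      by (simp add: sum_distrib_left mult_ac)
    also have "\<dots> = (\<Sum>z\<in>I x y. \<Sum>w\<in>I x z. (u * v - 1) ^ r x w * b w z * \<Gamma> z y)"
      by (rule swap[OF xS yS xy])
    also have "\<dots> = (\<Sum>w\<in>I x y. R x w * \<Gamma> w y)"
      unfolding R_def sum_distrib_right ..
    finally show ?thesis .
  qed
  have e: "L x y = R x y" if xS: "x \<in> S" and yS: "y \<in> S" and xy: "le x y" for x y
    using yS xy
  proof (induction "r x y" arbitrary: y rule: less_induct)
    case less
    note yS = less.prems(1) and xy = less.prems(2)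
    have IH: "L x w - R x w = 0" if w: "w \<in> I x y - {y}" for w
    proof -
      have ww: "w \<in> S" "le x w" "le w y" "w \<noteq> y" using w by (auto simp: itv_def)
      have "r w y \<noteq> 0" using rk0[OF ww(1) yS ww(3)] ww(4) by simp
      hence "r x w < r x y" using rk_add[OF xS ww(1) yS ww(2,3)] by simp
      thus ?thesis using less.hyps[of w] ww by simp
    qed
    have G1: "\<Gamma> y y = 1" unfolding \<Gamma>_def using G_refl[OF yS] rk_refl[OF yS] by simp
    have "0 = (\<Sum>w\<in>I x y. (L x w - R x w) * \<Gamma> w y)"
      using d[OF xS yS xy] by (simp add: left_diff_distrib sum_subtractf)
    also have "\<dots> = (L x y - R x y) * \<Gamma> y y + (\<Sum>w\<in>I x y - {y}. (L x w - R x w) * \<Gamma> w y)"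
      by (rule sum.remove[OF fin_itv right_in[OF yS xy]])
    also have "\<dots> = L x y - R x y" using IH G1 by simp
    finally show ?case by simp
  qed
  have f: "L zero one = R zero one" by (rule e[OF zeroS oneS zero_le[OF oneS]])
  have "L zero one = (\<Sum>x\<in>S. eval_uv (Bpoly S le zero x) (1 / u) (1 / v) * (u * v) ^ (r zero x)
                   * (v - u) ^ (d - r zero x))"
    unfolding L_def itv_full
  proof (rule sum.cong[OF refl])
    fix x assume xS: "x \<in> S"
    have "r x one = d - r zero x" using rk_add[OF zeroS xS oneS zero_le[OF xS] le_one[OF xS]] rk_top by simp
    thus "b' zero x * (v - u) ^ r x one = eval_uv (Bpoly S le zero x) (1 / u) (1 / v) * (u * v) ^ r zero x * (v - u) ^ (d - r zero x)"
      unfolding b'_def by simp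
  qed
  moreover have "R zero one = (\<Sum>x\<in>S. eval_uv (Bpoly S le x one) u v * (u * v - 1) ^ (r zero x))"
    unfolding R_def itv_full b_def by (simp add: mult_ac)
  ultimately show ?thesis using f by simp
qed

end

theorem proposition2p11:
  fixes S :: "'a set" and le :: "'a \<Rightarrow> 'a \<Rightarrow> bool" and zero one :: 'a and d :: nat
    and u v :: real
  assumes "eulerian S le zero one d"
    and "u \<noteq> 0" and "v \<noteq> 0"
  shows "(\<Sum>x\<in>S. eval_uv (Bpoly S le zero x) (1 / u) (1 / v) * (u * v) ^ (rk S le zero x)
                   * (v - u) ^ (d - rk S le zero x))
       = (\<Sum>x\<in>S. eval_uv (Bpoly S le x one) u v * (u * v - 1) ^ (rk S le zero x))"
proof -
  interpret eul S le zero one d by (rule eul.intro[OF assms(1)])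
  show ?thesis by (rule main[OF assms(2,3)])
qed

end
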